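(* Let $(m_j)_{j=1}^{\infty}$ be a strictly increasing sequence of positive integers with $m_{j+1}\ge q\,m_j$ for all $j$, where $q\ge 2$. Let $A_j>0$, $B_j\in\mathbb{C}$ with $A_j^2-|B_j|^2=1$. For $N\in\mathbb{N}$ define trigonometric polynomials $a_N,b_N$ by $$\begin{bmatrix} a_N(t) & b_N(t)\\ \overline{b_N(t)} & \overline{a_N(t)}\end{bmatrix}=\prod_{j=1}^{N}\begin{bmatrix} A_j & B_j e^{2\pi i m_j t}\\ \overline{B_j}e^{-2\pi i m_j t} & A_j\end{bmatrix}$$ (factors in increasing order of $j$ from left to right). Then (a) $\displaystyle\int_{\mathbb{T}}\big(|a_N(t)|^2+|b_N(t)|^2\big)\,dt=\prod_{j=1}^{N}(A_j^2+|B_j|^2)$; (b) $\displaystyle\int_{\mathbb{T}}\big(|a_N(t)-A_1\cdots A_N|^2+|b_N(t)|^2\big)\,dt=\prod_{j=1}^{N}(A_j^2+|B_j|^2)-\prod_{j=1}^{N}A_j^2$.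
   Context: $\mathbb{T}=\mathbb{R}/\mathbb{Z}$ with Lebesgue measure. *)

theory Defs
  imports "HOL-Analysis.Analysis"
begin

definition factor_mat :: "real \<Rightarrow> complex \<Rightarrow> nat \<Rightarrow> real \<Rightarrow> complex^2^2" where
  "factor_mat A B m t =
     (\<chi> i j. if i = 1 then (if j = 1 then complex_of_real A
                              else B * exp (2 * pi * \<i> * of_nat m * of_real t))
             else (if j = 1 then cnj B * exp (- (2 * pi * \<i> * of_nat m * of_real t))
                   else complex_of_real A))"

fun prod_mat :: "(nat \<Rightarrow> real) \<Rightarrow> (nat \<Rightarrow> complex) \<Rightarrow> (nat \<Rightarrow> nat) \<Rightarrow> nat \<Rightarrow> real \<Rightarrow> complex^2^2" where
  "prod_mat A B m 0 t = mat 1"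
| "prod_mat A B m (Suc N) t = prod_mat A B m N t ** factor_mat (A (Suc N)) (B (Suc N)) (m (Suc N)) t"

definition a_poly :: "(nat \<Rightarrow> real) \<Rightarrow> (nat \<Rightarrow> complex) \<Rightarrow> (nat \<Rightarrow> nat) \<Rightarrow> nat \<Rightarrow> real \<Rightarrow> complex" where
  "a_poly A B m N t = prod_mat A B m N t $ 1 $ 1"

definition b_poly :: "(nat \<Rightarrow> real) \<Rightarrow> (nat \<Rightarrow> complex) \<Rightarrow> (nat \<Rightarrow> nat) \<Rightarrow> nat \<Rightarrow> real \<Rightarrow> complex" where
  "b_poly A B m N t = prod_mat A B m N t $ 1 $ 2"

end

theory Submission
  imports Defs
begin

definition ex :: "int \<Rightarrow> real \<Rightarrow> complex" where
  "ex k t = exp (2 * pi * \<i> * of_int k * of_real t)"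

lemma ex_integral:
  assumes "k \<noteq> 0" shows "(ex k has_integral 0) {0..1}"
proof -
  define a where "a = 2 * pi * \<i> * of_int k"
  have a0: "a \<noteq> 0" using assms by (simp add: a_def)
  have "\<And>t. t \<in> {0..1} \<Longrightarrow> ((\<lambda>x. exp (a * x) / a) has_vector_derivative exp (a * t)) (at t within {0..1})"
    using a0
    by (intro derivative_eq_intros has_complex_derivative_imp_has_vector_derivative [unfolded o_def] | simp)+
  then have "((\<lambda>t. exp(a * of_real t)) has_integral exp(a * complex_of_real 1)/a - exp(a * of_real 0)/a)  {0..1}"
    by (meson fundamental_theorem_of_calculus zero_le_one)
  moreover have "exp a = 1" unfolding a_def
    using exp_integer_2pi[of "of_int k"] by (simp add: mult_ac)
  ultimately have "((\<lambda>t. exp(a * of_real t)) has_integral 0) {0..1}" by simp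
  moreover have "ex k = (\<lambda>t. exp(a * of_real t))" by (simp add: ex_def a_def fun_eq_iff)
  ultimately show ?thesis by simp
qed

lemma ex_add: "ex k t * ex l t = ex (k + l) t"
  by (simp add: ex_def flip: exp_add) (simp add: algebra_simps)

lemma ex_cnj: "cnj (ex k t) = ex (-k) t"
  by (simp add: ex_def exp_cnj)

definition ev :: "(complex \<times> int) list \<Rightarrow> real \<Rightarrow> complex" where
  "ev xs t = (\<Sum>(c,k)\<leftarrow>xs. c * ex k t)"

lemma ev_Nil[simp]: "ev [] t = 0" by (simp add: ev_def)
lemma ev_Cons[simp]: "ev ((c,k)#xs) t = c * ex k t + ev xs t" by (simp add: ev_def)
lemma ev_append[simp]: "ev (xs @ ys) t = ev xs t + ev ys t" by (simp add: ev_def)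

lemma ev_map: "ev (map (\<lambda>(c,k). (d * c, k + l)) xs) t = d * ex l t * ev xs t"
  by (induction xs) (auto simp: ring_distribs ex_add[symmetric] mult_ac)

fun mulL :: "(complex \<times> int) list \<Rightarrow> (complex \<times> int) list \<Rightarrow> (complex \<times> int) list" where
  "mulL xs [] = []"
| "mulL xs ((d,l)#ys) = map (\<lambda>(c,k). (d * c, k + l)) xs @ mulL xs ys"

lemma ev_mulL: "ev (mulL xs ys) t = ev xs t * ev ys t"
  by (induction xs ys rule: mulL.induct) (auto simp: ev_map ring_distribs mult_ac)

lemma snd_mulL: "snd ` set (mulL xs ys) \<subseteq> {k + l |k l. k \<in> snd ` set xs \<and> l \<in> snd ` set ys}"
  by (induction xs ys rule: mulL.induct) force+

lemma ev_cnj: "cnj (ev xs t) = ev (map (\<lambda>(c,k). (cnj c, -k)) xs) t"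
  by (induction xs) (auto simp: ex_cnj)

lemma ev_integral: "0 \<notin> snd ` set xs \<Longrightarrow> (ev xs has_integral 0) {0..1}"
proof (induction xs)
  case Nil then show ?case by (simp add: ev_def)
next
  case (Cons x xs)
  obtain c k where x: "x = (c,k)" by force
  have "((\<lambda>t. c * ex k t + ev xs t) has_integral (c * 0 + 0)) {0..1}"
    using Cons x by (intro has_integral_add has_integral_mult_right ex_integral) auto
  then show ?case using x by simp
qed

definition spec :: "int set \<Rightarrow> (real \<Rightarrow> complex) \<Rightarrow> bool" where
  "spec S f \<longleftrightarrow> (\<exists>xs. snd ` set xs \<subseteq> S \<and> f = ev xs)"

lemma spec_add: "spec S f \<Longrightarrow> spec T g \<Longrightarrow> spec (S \<union> T) (\<lambda>t. f t + g t)"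
  unfolding spec_def
proof (elim exE conjE)
  fix xs ys assume "snd ` set xs \<subseteq> S" "f = ev xs" "snd ` set ys \<subseteq> T" "g = ev ys"
  then show "\<exists>zs. snd ` set zs \<subseteq> S \<union> T \<and> (\<lambda>t. f t + g t) = ev zs"
    by (intro exI[of _ "xs @ ys"]) auto
qed

lemma spec_mono: "spec S f \<Longrightarrow> S \<subseteq> T \<Longrightarrow> spec T f"
  unfolding spec_def by blast

lemma spec_mul: "spec S f \<Longrightarrow> spec T g \<Longrightarrow> spec {k + l |k l. k \<in> S \<and> l \<in> T} (\<lambda>t. f t * g t)"
  unfolding spec_def
proof (elim exE conjE)
  fix xs ys assume h: "snd ` set xs \<subseteq> S" "f = ev xs" "snd ` set ys \<subseteq> T" "g = ev ys"
  have "snd ` set (mulL xs ys) \<subseteq> {k + l |k l. k \<in> S \<and> l \<in> T}"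
    using snd_mulL[of xs ys] h(1,3) by blast
  then show "\<exists>zs. snd ` set zs \<subseteq> {k + l |k l. k \<in> S \<and> l \<in> T} \<and> (\<lambda>t. f t * g t) = ev zs"
    using h by (intro exI[of _ "mulL xs ys"]) (auto simp: ev_mulL)
qed

lemma spec_cnj: "spec S f \<Longrightarrow> spec (uminus ` S) (\<lambda>t. cnj (f t))"
  unfolding spec_def
proof (elim exE conjE)
  fix xs assume "snd ` set xs \<subseteq> S" "f = ev xs"
  then show "\<exists>zs. snd ` set zs \<subseteq> uminus ` S \<and> (\<lambda>t. cnj (f t)) = ev zs"
    by (intro exI[of _ "map (\<lambda>(c,k). (cnj c, -k)) xs"]) (auto simp: ev_cnj)
qed

lemma spec_const_ex: "spec {k} (\<lambda>t. c * ex k t)"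
  unfolding spec_def by (intro exI[of _ "[(c,k)]"]) auto

lemma spec_integral: "spec S f \<Longrightarrow> 0 \<notin> S \<Longrightarrow> (f has_integral 0) {0..1}"
  unfolding spec_def using ev_integral by blast


lemma a_Suc: "a_poly A B m (Suc N) t = a_poly A B m N t * complex_of_real (A (Suc N))
   + b_poly A B m N t * (cnj (B (Suc N)) * ex (- int (m (Suc N))) t)"
  by (simp add: a_poly_def b_poly_def matrix_matrix_mult_def sum_2 factor_mat_def ex_def)

lemma b_Suc: "b_poly A B m (Suc N) t = a_poly A B m N t * (B (Suc N) * ex (int (m (Suc N))) t)
   + b_poly A B m N t * complex_of_real (A (Suc N))"
  by (simp add: a_poly_def b_poly_def matrix_matrix_mult_def sum_2 factor_mat_def ex_def)

lemma a0: "a_poly A B m 0 t = 1" by (simp add: a_poly_def mat_def)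
lemma a0f: "a_poly A B m 0 = (\<lambda>t. 1)" by (simp add: fun_eq_iff a0)
lemma b0: "b_poly A B m 0 t = 0" by (simp add: b_poly_def mat_def)

lemma alg: "(e::complex) * ce = 1 \<Longrightarrow> (a*\<alpha> + b*(c\<beta>*ce)) * (ca*\<alpha> + cb*(\<beta>*e)) + (a*(\<beta>*e) + b*\<alpha>)*(ca*(c\<beta>*ce) + cb*\<alpha>)
  = (\<alpha>*\<alpha> + \<beta>*c\<beta>)*(a*ca + b*cb) + 2*\<alpha>*(\<beta>*e*a*cb + c\<beta>*ce*ca*b)"
  by algebra

lemma ev_scal: "ev xs t * c = ev (map (\<lambda>(d,k). (d*c,k)) xs) t"
  by (induction xs) (auto simp: ring_distribs mult_ac)

lemma spec_scal: "spec S f \<Longrightarrow> spec S (\<lambda>t. f t * c)"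
  unfolding spec_def
proof (elim exE conjE)
  fix xs assume "snd ` set xs \<subseteq> S" "f = ev xs"
  then show "\<exists>zs. snd ` set zs \<subseteq> S \<and> (\<lambda>t. f t * c) = ev zs"
    by (intro exI[of _ "map (\<lambda>(d,k). (d*c,k)) xs"]) (auto simp: ev_scal)
qed


lemma zero_notin_uminus: "(0::int) \<notin> S \<Longrightarrow> 0 \<notin> uminus ` S" by auto

definition MM :: "(nat \<Rightarrow> nat) \<Rightarrow> nat \<Rightarrow> int" where
  "MM m N = (if N = 0 then 0 else int (m N))"

lemma main_ind:
  assumes mp: "\<And>j. j \<ge> 1 \<Longrightarrow> m j > 0" and lac: "\<And>j. j \<ge> 1 \<Longrightarrow> 2 * m j \<le> m (Suc j)"
  shows "spec {k. k \<le> 0 \<and> (k = 0 \<or> - MM m N < k)} (a_poly A B m N)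
    \<and> spec {k. 1 \<le> k \<and> k \<le> MM m N} (b_poly A B m N)
    \<and> (a_poly A B m N has_integral of_real (\<Prod>j=1..N. A j)) {0..1}
    \<and> ((\<lambda>t. a_poly A B m N t * cnj (a_poly A B m N t) + b_poly A B m N t * cnj (b_poly A B m N t))
         has_integral of_real (\<Prod>j=1..N. (A j)^2 + (cmod (B j))^2)) {0..1}"
proof (induction N)
  case 0
  have "a_poly A B m 0 = ev [(1,0)]" by (simp add: fun_eq_iff a0 ex_def)
  moreover have "b_poly A B m 0 = ev []" by (simp add: fun_eq_iff b0)
  ultimately have "spec {k. k \<le> 0 \<and> (k = 0 \<or> - MM m 0 < k)} (a_poly A B m 0)
    \<and> spec {k. 1 \<le> k \<and> k \<le> MM m 0} (b_poly A B m 0)" unfolding spec_def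
    by (intro conjI exI[of _ "[(1,0)]"] exI[of _ "[]"]) (auto simp: MM_def)
  moreover have "((\<lambda>t::real. 1::complex) has_integral 1) {0..1}"
    using has_integral_const_real[of "1::complex" "0::real" 1] by simp
  then have "(a_poly A B m 0 has_integral of_real (\<Prod>j=1..0. A j)) {0..1}"
    "((\<lambda>t. a_poly A B m 0 t * cnj (a_poly A B m 0 t) + b_poly A B m 0 t * cnj (b_poly A B m 0 t))
         has_integral of_real (\<Prod>j=1..0. (A j)^2 + (cmod (B j))^2)) {0..1}"
    by (simp_all add: a0 b0 a0f)
  ultimately show ?case by blast
next
  case (Suc N)
  define a where "a = a_poly A B m N"
  define b where "b = b_poly A B m N"
  define M where "M = MM m N"
  define M' where "M' = int (m (Suc N))"
  define \<alpha> where "\<alpha> = A (Suc N)"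
  define \<beta> where "\<beta> = B (Suc N)"
  have M'1: "M' \<ge> 1" using mp[of "Suc N"] by (simp add: M'_def)
  have MM': "2 * M \<le> M'"
  proof (cases N)
    case 0 then show ?thesis using M'1 by (simp add: M_def MM_def)
  next
    case (Suc n) then show ?thesis using lac[of N] by (simp add: M_def MM_def M'_def)
  qed
  have M0: "M \<ge> 0" by (simp add: M_def MM_def)
  have sa: "spec {k. k \<le> 0 \<and> (k = 0 \<or> - M < k)} a"
    and sb: "spec {k. 1 \<le> k \<and> k \<le> M} b"
    and ia: "(a has_integral of_real (\<Prod>j=1..N. A j)) {0..1}"
    and ig: "((\<lambda>t. a t * cnj (a t) + b t * cnj (b t))
         has_integral of_real (\<Prod>j=1..N. (A j)^2 + (cmod (B j))^2)) {0..1}"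
    using Suc.IH by (simp_all add: a_def b_def M_def)
  have aS: "a_poly A B m (Suc N) = (\<lambda>t. a t * of_real \<alpha> + b t * (cnj \<beta> * ex (- M') t))"
    by (simp add: fun_eq_iff a_Suc a_def b_def \<alpha>_def \<beta>_def M'_def)
  have bS: "b_poly A B m (Suc N) = (\<lambda>t. a t * (\<beta> * ex M' t) + b t * of_real \<alpha>)"
    by (simp add: fun_eq_iff b_Suc a_def b_def \<alpha>_def \<beta>_def M'_def)
  have MMS: "MM m (Suc N) = M'" by (simp add: MM_def M'_def)
  have s1: "spec {k. k \<le> 0 \<and> (k = 0 \<or> - M' < k)} (a_poly A B m (Suc N))"
  proof -
    have "spec ({k. k \<le> 0 \<and> (k = 0 \<or> - M < k)} \<union> {k + l |k l. k \<in> {k. 1 \<le> k \<and> k \<le> M} \<and> l \<in> {- M'}})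
       (a_poly A B m (Suc N))"
      unfolding aS by (intro spec_add spec_scal spec_mul sa sb spec_const_ex)
    then show ?thesis by (rule spec_mono) (use MM' M0 in auto)
  qed
  have s2: "spec {k. 1 \<le> k \<and> k \<le> M'} (b_poly A B m (Suc N))"
  proof -
    have "spec ({k + l |k l. k \<in> {k. k \<le> 0 \<and> (k = 0 \<or> - M < k)} \<and> l \<in> {M'}} \<union> {k. 1 \<le> k \<and> k \<le> M})
       (b_poly A B m (Suc N))"
      unfolding bS by (intro spec_add spec_scal spec_mul sa sb spec_const_ex)
    then show ?thesis by (rule spec_mono) (use MM' M0 M'1 in auto)
  qed
  have i0: "((\<lambda>t. b t * (cnj \<beta> * ex (- M') t)) has_integral 0) {0..1}"
  proof (rule spec_integral)
    show "spec {k + l |k l. k \<in> {k. 1 \<le> k \<and> k \<le> M} \<and> l \<in> {- M'}} (\<lambda>t. b t * (cnj \<beta> * ex (- M') t))"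
      by (intro spec_mul sb spec_const_ex)
    show "0 \<notin> {k + l |k l. k \<in> {k. 1 \<le> k \<and> k \<le> M} \<and> l \<in> {- M'}}" using MM' M0 by auto
  qed
  have i1: "(a_poly A B m (Suc N) has_integral of_real (\<Prod>j=1..Suc N. A j)) {0..1}"
  proof -
    have "((\<lambda>t. a t * of_real \<alpha> + b t * (cnj \<beta> * ex (- M') t)) has_integral
       (of_real (\<Prod>j=1..N. A j) * of_real \<alpha> + 0)) {0..1}"
      by (intro has_integral_add has_integral_mult_left ia i0)
    then show ?thesis unfolding aS by (simp add: \<alpha>_def prod.nat_ivl_Suc')
  qed
  define h where "h = (\<lambda>t. a t * cnj (b t) * (\<beta> * ex M' t))"
  have sh: "spec {k + l |k l. k \<in> {k + l |k l. k \<in> {k. k \<le> 0 \<and> (k = 0 \<or> - M < k)} \<and> l \<in> uminus ` {k. 1 \<le> k \<and> k \<le> M}} \<and> l \<in> {M'}} h"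
    unfolding h_def by (intro spec_mul spec_cnj sa sb spec_const_ex)
  have h0: "0 \<notin> {k + l |k l. k \<in> {k + l |k l. k \<in> {k. k \<le> 0 \<and> (k = 0 \<or> - M < k)} \<and> l \<in> uminus ` {k. 1 \<le> k \<and> k \<le> M}} \<and> l \<in> {M'}}"
    using MM' M0 M'1 by auto
  have ih: "(h has_integral 0) {0..1}" by (rule spec_integral[OF sh h0])
  have ich: "((\<lambda>t. cnj (h t)) has_integral 0) {0..1}"
    by (rule spec_integral[OF spec_cnj[OF sh]]) (rule zero_notin_uminus[OF h0])
  have eq: "a_poly A B m (Suc N) t * cnj (a_poly A B m (Suc N) t) + b_poly A B m (Suc N) t * cnj (b_poly A B m (Suc N) t)
     = of_real (\<alpha>^2 + (cmod \<beta>)^2) * (a t * cnj (a t) + b t * cnj (b t)) + 2 * of_real \<alpha> * (h t + cnj (h t))" for t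
  proof -
    have e1: "ex M' t * ex (-M') t = 1" unfolding ex_add by (simp add: ex_def)
    have "cnj (ex (-M') t) = ex M' t" by (simp add: ex_cnj)
    have nb: "complex_of_real (\<alpha>^2 + (cmod \<beta>)^2) = of_real \<alpha> * of_real \<alpha> + \<beta> * cnj \<beta>"
      by (metis complex_norm_square of_real_add of_real_mult power2_eq_square)
    then show ?thesis unfolding aS bS h_def nb
      using alg[OF e1, of "a t" "of_real \<alpha>" "b t" "cnj \<beta>" "cnj (a t)" "cnj (b t)" \<beta>]
      by (simp add: ex_cnj mult_ac)
  qed
  have "((\<lambda>t. of_real (\<alpha>^2 + (cmod \<beta>)^2) * (a t * cnj (a t) + b t * cnj (b t)) + 2 * of_real \<alpha> * (h t + cnj (h t)))
     has_integral (of_real (\<alpha>^2 + (cmod \<beta>)^2) * of_real (\<Prod>j=1..N. (A j)^2 + (cmod (B j))^2) + 2 * of_real \<alpha> * (0 + 0))) {0..1}"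
    by (intro has_integral_add has_integral_mult_right ig ih ich)
  then have i2: "((\<lambda>t. a_poly A B m (Suc N) t * cnj (a_poly A B m (Suc N) t) + b_poly A B m (Suc N) t * cnj (b_poly A B m (Suc N) t))
         has_integral of_real (\<Prod>j=1..Suc N. (A j)^2 + (cmod (B j))^2)) {0..1}"
    unfolding eq by (simp add: \<alpha>_def \<beta>_def prod.nat_ivl_Suc' mult_ac)
  show ?case using s1 s2 i1 i2 MMS by simp
qed


lemma cmod_sub_real: "(cmod (z - complex_of_real P))\<^sup>2 = (cmod z)\<^sup>2 - 2 * P * Re z + P\<^sup>2"
  by (simp only: cmod_power2) (simp add: power2_eq_square algebra_simps)

lemma re_mult_cnj: "Re (z * cnj z) = (cmod z)\<^sup>2"
  by (metis Re_complex_of_real complex_norm_square)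

theorem lemma2p2:
  fixes m :: "nat \<Rightarrow> nat" and q :: real and A :: "nat \<Rightarrow> real" and B :: "nat \<Rightarrow> complex"
    and N :: nat
  assumes q: "q \<ge> 2"
    and m_pos: "\<And>j. j \<ge> 1 \<Longrightarrow> m j > 0"
    and m_inc: "\<And>j. j \<ge> 1 \<Longrightarrow> m j < m (Suc j)"
    and m_lac: "\<And>j. j \<ge> 1 \<Longrightarrow> real (m (Suc j)) \<ge> q * real (m j)"
    and A_pos: "\<And>j. j \<ge> 1 \<Longrightarrow> A j > 0"
    and AB: "\<And>j. j \<ge> 1 \<Longrightarrow> (A j)\<^sup>2 - (cmod (B j))\<^sup>2 = 1"
  shows "integral {0..1} (\<lambda>t. (cmod (a_poly A B m N t))\<^sup>2 + (cmod (b_poly A B m N t))\<^sup>2)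
           = (\<Prod>j=1..N. (A j)\<^sup>2 + (cmod (B j))\<^sup>2)
     \<and> integral {0..1} (\<lambda>t. (cmod (a_poly A B m N t - complex_of_real (\<Prod>j=1..N. A j)))\<^sup>2
                               + (cmod (b_poly A B m N t))\<^sup>2)
           = (\<Prod>j=1..N. (A j)\<^sup>2 + (cmod (B j))\<^sup>2) - (\<Prod>j=1..N. (A j)\<^sup>2)"
proof -
  have lac: "2 * m j \<le> m (Suc j)" if "j \<ge> 1" for j
  proof -
    have "2 * real (m j) \<le> q * real (m j)" using q by (intro mult_right_mono) auto
    also have "\<dots> \<le> real (m (Suc j))" using m_lac[OF that] .
    finally show ?thesis by linarith
  qed
  define a where "a = a_poly A B m N"
  define b where "b = b_poly A B m N"
  define P where "P = (\<Prod>j=1..N. A j)"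
  define Q where "Q = (\<Prod>j=1..N. (A j)\<^sup>2 + (cmod (B j))\<^sup>2)"
  from main_ind[where m=m and A=A and B=B and N=N, OF m_pos lac]
  have ia: "(a has_integral of_real P) {0..1}"
    and ig: "((\<lambda>t. a t * cnj (a t) + b t * cnj (b t)) has_integral of_real Q) {0..1}"
    by (simp_all add: a_def b_def P_def Q_def)
  have rg: "((\<lambda>t. (cmod (a t))\<^sup>2 + (cmod (b t))\<^sup>2) has_integral Q) {0..1}"
    using has_integral_linear[OF ig bounded_linear_Re] by (simp only: o_def plus_complex.sel re_mult_cnj Re_complex_of_real)
  have ra: "((\<lambda>t. Re (a t)) has_integral P) {0..1}"
    using has_integral_linear[OF ia bounded_linear_Re] by (simp add: o_def)
  have "((\<lambda>t. ((cmod (a t))\<^sup>2 + (cmod (b t))\<^sup>2) - (2 * P) * Re (a t) + P\<^sup>2) has_integral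
      (Q - (2 * P) * P + P\<^sup>2)) {0..1}"
    using has_integral_const_real[of "P\<^sup>2" "0::real" 1]
    by (intro has_integral_add has_integral_diff has_integral_mult_right rg ra) simp_all
  moreover have "(\<lambda>t. (cmod (a t - complex_of_real P))\<^sup>2 + (cmod (b t))\<^sup>2)
     = (\<lambda>t. ((cmod (a t))\<^sup>2 + (cmod (b t))\<^sup>2) - (2 * P) * Re (a t) + P\<^sup>2)"
    by (simp add: fun_eq_iff cmod_sub_real)
  moreover have "Q - (2 * P) * P + P\<^sup>2 = Q - (\<Prod>j=1..N. (A j)\<^sup>2)"
    by (simp add: P_def power2_eq_square prod.distrib)
  ultimately have rb: "((\<lambda>t. (cmod (a t - complex_of_real P))\<^sup>2 + (cmod (b t))\<^sup>2) has_integral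
      (Q - (\<Prod>j=1..N. (A j)\<^sup>2))) {0..1}"
    by simp
  show ?thesis
    using integral_unique[OF rg] integral_unique[OF rb]
    by (simp add: a_def b_def P_def Q_def)
qed

end
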